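(* Let $C$ be a strongly connected component of $G$. If at least one vertex of $C$ has out-degree greater than one within $C$, then $\psi$ restricted to $\Delta_C$ is chaotic. If every vertex of $C$ has out-degree exactly one within $C$, then $\Delta_C$ is a single periodic orbit of $\psi$.
   Context: $G$ is a finite directed graph (loops allowed) with vertex set $V$. $\Omega$ is the set of bi-infinite paths in $G$, i.e. sequences $(x_i)_{i\in\mathbb Z}\in V^{\mathbb Z}$ such that for every $i$ there is an edge from $x_i$ to $x_{i+1}$. Fix $h>0$. $\bar\Delta$ is the set of functions $x:\mathbb R\to V$ that are constant on each interval $[nh,(n+1)h)$, $n\in\mathbb Z$, and satisfy $(x(ih))_{i\in\mathbb Z}\in\Omega$. $\Delta=\{x(\cdot+t): x\in\bar\Delta,\ t\in\mathbb R\}$, with metric $d(x,y)=\sum_{i\in\mathbb Z}4^{-|i|}\frac1h\int_{ih}^{(i+1)h}\delta(x,y,t)\,dt$, where $\delta(x,y,t)=1$ if $x(t)\ne y(t)$ and $0$ otherwise. The flow $\psi:\mathbb R\times\Delta\to\Delta$ is $\psi(t,x)=x(\cdot+t)$. A strongly connected component of $G$ is a maximal nonempty set $C\subseteq V$ such that for all $u,v\in C$ (including $u=v$) there is a directed path of positive length from $u$ to $v$ with all vertices in $C$. The lift of $C$ is $\Delta_C=\{f\in\Delta: f(t)\in C \text{ for all } t\in\mathbb R\}$. A flow on a metric space $X$ is chaotic if (i) it has sensitive dependence on initial conditions (there is $\delta>0$ such that for every $x\in X$ and every neighborhood $B$ of $x$ there are $y\in B$, $t>0$ with $d(\Phi_t(x),\Phi_t(y))>\delta$),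 (ii) its periodic points are dense in $X$, and (iii) it is topologically transitive (there is $x\in X$ with $\omega(x)=X$, where $\omega(x)$ is the set of limits of $\Phi_{t_k}(x)$ along sequences $t_k\to+\infty$). *)

theory Defs
  imports "HOL-Analysis.Analysis"
begin

text \<open>Directed graph: vertex set = the finite type 'v, edges given by E (loops allowed).\<close>

definition bi_paths :: "('v \<times> 'v) set \<Rightarrow> (int \<Rightarrow> 'v) set" where
  "bi_paths E = {x. \<forall>i. (x i, x (i + 1)) \<in> E}"

definition Delta_bar :: "('v \<times> 'v) set \<Rightarrow> real \<Rightarrow> (real \<Rightarrow> 'v) set" where
  "Delta_bar E h = {x. (\<forall>n::int. \<forall>t. of_int n * h \<le> t \<and> t < of_int (n + 1) * h \<longrightarrow> x t = x (of_int n * h))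
                      \<and> (\<lambda>i::int. x (of_int i * h)) \<in> bi_paths E}"

definition Delta :: "('v \<times> 'v) set \<Rightarrow> real \<Rightarrow> (real \<Rightarrow> 'v) set" where
  "Delta E h = {(\<lambda>s. x (s + t)) | x t. x \<in> Delta_bar E h}"

definition dist_Delta :: "real \<Rightarrow> (real \<Rightarrow> 'v) \<Rightarrow> (real \<Rightarrow> 'v) \<Rightarrow> real" where
  "dist_Delta h x y = (\<Sum>\<^sub>\<infinity>i::int. (1/4) ^ nat \<bar>i\<bar> * (1 / h) *
      integral {of_int i * h .. of_int (i + 1) * h} (\<lambda>t. if x t \<noteq> y t then 1 else 0))"

definition psi :: "real \<Rightarrow> (real \<Rightarrow> 'v) \<Rightarrow> (real \<Rightarrow> 'v)" where
  "psi t x = (\<lambda>s. x (s + t))"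

definition strongly_connected_in :: "('v \<times> 'v) set \<Rightarrow> 'v set \<Rightarrow> bool" where
  "strongly_connected_in E C \<longleftrightarrow> (\<forall>u\<in>C. \<forall>v\<in>C. (u, v) \<in> (E \<inter> C \<times> C)\<^sup>+)"

definition scc :: "('v \<times> 'v) set \<Rightarrow> 'v set \<Rightarrow> bool" where
  "scc E C \<longleftrightarrow> C \<noteq> {} \<and> strongly_connected_in E C \<and>
     (\<forall>D. C \<subseteq> D \<and> D \<noteq> {} \<and> strongly_connected_in E D \<longrightarrow> D = C)"

definition out_degree_in :: "('v \<times> 'v) set \<Rightarrow> 'v set \<Rightarrow> 'v \<Rightarrow> nat" where
  "out_degree_in E C v = card {w \<in> C. (v, w) \<in> E}"

definition lift :: "('v \<times> 'v) set \<Rightarrow> real \<Rightarrow> 'v set \<Rightarrow> (real \<Rightarrow> 'v) set" where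
  "lift E h C = {f \<in> Delta E h. \<forall>t. f t \<in> C}"

definition sensitive :: "'a set \<Rightarrow> ('a \<Rightarrow> 'a \<Rightarrow> real) \<Rightarrow> (real \<Rightarrow> 'a \<Rightarrow> 'a) \<Rightarrow> bool" where
  "sensitive X d Phi \<longleftrightarrow> (\<exists>\<delta>>0. \<forall>x\<in>X. \<forall>B. B \<subseteq> X \<and> (\<exists>e>0. {y\<in>X. d x y < e} \<subseteq> B) \<longrightarrow>
      (\<exists>y\<in>B. \<exists>t>0. d (Phi t x) (Phi t y) > \<delta>))"

definition periodic_point :: "(real \<Rightarrow> 'a \<Rightarrow> 'a) \<Rightarrow> 'a \<Rightarrow> bool" where
  "periodic_point Phi x \<longleftrightarrow> (\<exists>T>0. Phi T x = x)"

definition dense_periodic :: "'a set \<Rightarrow> ('a \<Rightarrow> 'a \<Rightarrow> real) \<Rightarrow> (real \<Rightarrow> 'a \<Rightarrow> 'a) \<Rightarrow> bool" where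
  "dense_periodic X d Phi \<longleftrightarrow> (\<forall>x\<in>X. \<forall>e>0. \<exists>p\<in>X. periodic_point Phi p \<and> d x p < e)"

definition omega_limit :: "'a set \<Rightarrow> ('a \<Rightarrow> 'a \<Rightarrow> real) \<Rightarrow> (real \<Rightarrow> 'a \<Rightarrow> 'a) \<Rightarrow> 'a \<Rightarrow> 'a set" where
  "omega_limit X d Phi x = {y \<in> X. \<exists>t::nat \<Rightarrow> real. filterlim t at_top sequentially \<and>
      (\<lambda>k. d (Phi (t k) x) y) \<longlonglongrightarrow> 0}"

definition transitive :: "'a set \<Rightarrow> ('a \<Rightarrow> 'a \<Rightarrow> real) \<Rightarrow> (real \<Rightarrow> 'a \<Rightarrow> 'a) \<Rightarrow> bool" where
  "transitive X d Phi \<longleftrightarrow> (\<exists>x\<in>X. omega_limit X d Phi x = X)"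

definition chaotic :: "'a set \<Rightarrow> ('a \<Rightarrow> 'a \<Rightarrow> real) \<Rightarrow> (real \<Rightarrow> 'a \<Rightarrow> 'a) \<Rightarrow> bool" where
  "chaotic X d Phi \<longleftrightarrow> sensitive X d Phi \<and> dense_periodic X d Phi \<and> transitive X d Phi"

end

theory Submission
  imports Defs
begin


definition S2 :: real where "S2 = (\<Sum>\<^sub>\<infinity>i::int. (1/2::real)^nat\<bar>i\<bar>)"

lemma summ_half: "(\<lambda>i::int. (1/2::real)^nat\<bar>i\<bar>) summable_on UNIV"
proof -
  have g: "(\<lambda>n::nat. (1/2::real)^n) summable_on UNIV"
    by (rule summable_nonneg_imp_summable_on) (auto intro: summable_geometric)
  have U: "(UNIV::int set) = range int \<union> range (\<lambda>n. - int n)"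
  proof -
    { fix i :: int have "i \<in> range int \<union> range (\<lambda>n. - int n)"
      proof (cases "i \<ge> 0")
        case True then show ?thesis by (metis UnI1 nonneg_int_cases rangeI)
      next
        case False then have "i = - int (nat (-i))" by simp
        then show ?thesis by blast
      qed }
    then show ?thesis by blast
  qed
  have a: "(\<lambda>i::int. (1/2::real)^nat\<bar>i\<bar>) summable_on range int"
    using summable_on_reindex[of int UNIV "\<lambda>i::int. (1/2::real)^nat\<bar>i\<bar>"] g
    by (simp add: o_def)
  have b: "(\<lambda>i::int. (1/2::real)^nat\<bar>i\<bar>) summable_on range (\<lambda>n. - int n)"
    using summable_on_reindex[of "\<lambda>n. - int n" UNIV "\<lambda>i::int. (1/2::real)^nat\<bar>i\<bar>"] g
    by (simp add: o_def inj_on_def)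
  show ?thesis using summable_on_union[OF a b] U by simp
qed

lemma ind_int_nonneg: "0 \<le> integral {a..b} (\<lambda>t. if P t then 1 else (0::real))"
  by (cases "(\<lambda>t. if P t then 1 else (0::real)) integrable_on {a..b}")
     (auto intro!: integral_nonneg simp: not_integrable_integral)

lemma ind_int_le: assumes "a \<le> b" shows "integral {a..b} (\<lambda>t. if P t then 1 else (0::real)) \<le> b - a"
proof (cases "(\<lambda>t. if P t then 1 else (0::real)) integrable_on {a..b}")
  case True
  have "integral {a..b} (\<lambda>t. if P t then 1 else (0::real)) \<le> integral {a..b} (\<lambda>t. 1)"
    by (rule integral_le[OF True]) auto
  then show ?thesis using assms by (simp add: integral_const_real)
next
  case False then show ?thesis using assms by (simp add: not_integrable_integral)
qed

definition Tm :: "real \<Rightarrow> (real \<Rightarrow> 'v) \<Rightarrow> (real \<Rightarrow> 'v) \<Rightarrow> int \<Rightarrow> real" where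
  "Tm h x y i = (1/4) ^ nat \<bar>i\<bar> * (1 / h) *
      integral {of_int i * h .. of_int (i + 1) * h} (\<lambda>t. if x t \<noteq> y t then 1 else 0)"

lemma dist_Tm: "dist_Delta h x y = infsum (Tm h x y) UNIV"
  unfolding dist_Delta_def Tm_def by simp

lemma Tm_nonneg: "h > 0 \<Longrightarrow> 0 \<le> Tm h x y i"
  unfolding Tm_def by (intro mult_nonneg_nonneg ind_int_nonneg) auto

lemma Tm_le: assumes "h > 0" shows "Tm h x y i \<le> (1/4) ^ nat \<bar>i\<bar>"
proof -
  have "integral {of_int i * h .. of_int (i + 1) * h} (\<lambda>t. if x t \<noteq> y t then 1 else (0::real))
        \<le> of_int (i + 1) * h - of_int i * h"
    by (rule ind_int_le) (use assms in \<open>simp add: algebra_simps\<close>)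
  also have "\<dots> = h" by (simp add: algebra_simps)
  finally have "(1/h) * integral {of_int i * h .. of_int (i + 1) * h} (\<lambda>t. if x t \<noteq> y t then 1 else (0::real)) \<le> 1"
    using assms by (simp add: field_simps)
  then have "(1/4::real) ^ nat \<bar>i\<bar> * ((1/h) * integral {of_int i * h .. of_int (i + 1) * h} (\<lambda>t. if x t \<noteq> y t then 1 else (0::real))) \<le> (1/4) ^ nat \<bar>i\<bar> * 1"
    by (intro mult_left_mono) auto
  then show ?thesis unfolding Tm_def by (simp add: mult.assoc)
qed

lemma Tm_summable: assumes "h > 0" shows "Tm h x y summable_on UNIV"
proof (rule summable_on_comparison_test[OF summ_half])
  fix i :: int
  have "(1/4::real) ^ nat \<bar>i\<bar> \<le> (1/2) ^ nat \<bar>i\<bar>" by (rule power_mono) auto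
  then show "Tm h x y i \<le> (1/2) ^ nat \<bar>i\<bar>" using Tm_le[OF assms] by (rule order_trans[rotated])
  show "0 \<le> Tm h x y i" using Tm_nonneg[OF assms] .
qed

lemma dist_nonneg: "h > 0 \<Longrightarrow> 0 \<le> dist_Delta h x y"
  unfolding dist_Tm by (rule infsum_nonneg) (simp add: Tm_nonneg)

lemma S2_nonneg: "0 \<le> S2" unfolding S2_def by (rule infsum_nonneg) simp

lemma dist_upper:
  assumes h: "h > 0" and agree: "\<And>u. - real N * h \<le> u \<Longrightarrow> u \<le> (real N + 1) * h \<Longrightarrow> x u = y u"
  shows "dist_Delta h x y \<le> (1/2)^N * S2"
proof -
  have "infsum (Tm h x y) UNIV \<le> infsum (\<lambda>i::int. (1/2)^N * (1/2::real)^nat\<bar>i\<bar>) UNIV"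
  proof (rule infsum_mono[OF Tm_summable[OF h]])
    show "(\<lambda>i::int. (1/2)^N * (1/2::real)^nat\<bar>i\<bar>) summable_on UNIV"
      using summable_on_cmult_right[OF summ_half] by simp
    fix i :: int
    show "Tm h x y i \<le> (1/2)^N * (1/2::real)^nat\<bar>i\<bar>"
    proof (cases "\<bar>i\<bar> \<le> int N")
      case True
      have "integral {of_int i * h .. of_int (i + 1) * h} (\<lambda>t. if x t \<noteq> y t then 1 else (0::real))
          = integral {of_int i * h .. of_int (i + 1) * h} (\<lambda>t. 0)"
      proof (rule integral_cong)
        fix t assume t: "t \<in> {of_int i * h .. of_int (i + 1) * h}"
        have "- real N * h \<le> of_int i * h" using True h
          by (intro mult_right_mono) auto
        moreover have "of_int (i + 1) * h \<le> (real N + 1) * h" using True h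
          by (intro mult_right_mono) auto
        ultimately show "(if x t \<noteq> y t then 1 else (0::real)) = 0" using t agree by auto
      qed
      then have "Tm h x y i = 0" unfolding Tm_def by simp
      then show ?thesis by simp
    next
      case False
      then have "N \<le> nat \<bar>i\<bar>" by simp
      then obtain k where k: "nat \<bar>i\<bar> = N + k" using le_Suc_ex by blast
      have "(1/4::real) ^ nat \<bar>i\<bar> = (1/2)^(N+k) * (1/2)^(N+k)"
        by (simp add: k power_mult_distrib[symmetric] power_divide)
      also have "\<dots> \<le> (1/2)^N * (1/2)^(N+k)"
        by (intro mult_right_mono power_decreasing) auto
      finally show ?thesis using Tm_le[OF h, of x y i] k by simp
    qed
  qed
  also have "\<dots> = (1/2)^N * S2" unfolding S2_def by (rule infsum_cmult_right') 
  finally show ?thesis by (simp add: dist_Tm)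
qed

lemma dist_lower:
  assumes h: "h > 0" and diff: "\<And>u. 0 \<le> u \<Longrightarrow> u < h \<Longrightarrow> x u \<noteq> y u"
  shows "1 \<le> dist_Delta h x y"
proof -
  have "integral {0..h} (\<lambda>t. if x t \<noteq> y t then 1 else (0::real)) = integral {0..h} (\<lambda>t. 1)"
    by (rule integral_spike[where S="{h}"]) (auto simp: diff)
  then have "Tm h x y 0 = 1" unfolding Tm_def using h by (simp add: integral_const_real)
  moreover have "sum (Tm h x y) {0} \<le> infsum (Tm h x y) UNIV"
    by (rule finite_sum_le_infsum[OF Tm_summable[OF h]]) (auto simp: Tm_nonneg h)
  ultimately show ?thesis by (simp add: dist_Tm)
qed



definition sf :: "real \<Rightarrow> (int \<Rightarrow> 'v) \<Rightarrow> real \<Rightarrow> 'v" where "sf h p u = p \<lfloor>u / h\<rfloor>"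

definition Cpath :: "('v \<times> 'v) set \<Rightarrow> 'v set \<Rightarrow> (int \<Rightarrow> 'v) \<Rightarrow> bool" where
  "Cpath E C p \<longleftrightarrow> (\<forall>i. (p i, p (i + 1)) \<in> E \<inter> C \<times> C)"

lemma floor_blk:
  assumes "h > 0" "of_int n * h \<le> t" "t < of_int (n + 1) * h"
  shows "\<lfloor>t / h\<rfloor> = n"
proof -
  have "of_int n \<le> t / h" using assms by (simp add: pos_le_divide_eq)
  moreover have "t / h < of_int n + 1" using assms by (simp add: pos_divide_less_eq)
  ultimately show ?thesis by (simp add: floor_eq_iff)
qed

lemma floor_blk2: "h > 0 \<Longrightarrow> of_int \<lfloor>t / h\<rfloor> * h \<le> t \<and> t < of_int (\<lfloor>t / h\<rfloor> + 1) * h"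
proof -
  assume h: "h > 0"
  have f0: "of_int \<lfloor>t / h\<rfloor> \<le> t / h" by simp
  have a: "of_int \<lfloor>t / h\<rfloor> * h \<le> t" using mult_right_mono[OF f0, of h] h by simp
  have "t / h < of_int \<lfloor>t / h\<rfloor> + 1" by linarith
  then have "t < (of_int \<lfloor>t / h\<rfloor> + 1) * h" using h by (simp add: pos_divide_less_eq)
  with a show ?thesis by simp
qed

lemma sf_shift: "h > 0 \<Longrightarrow> sf h p (u + of_int n * h) = sf h (\<lambda>i. p (i + n)) u"
  unfolding sf_def
proof -
  assume h: "h > 0"
  have "(u + of_int n * h) / h = u / h + of_int n" using h by (simp add: field_simps)
  then show "p \<lfloor>(u + of_int n * h) / h\<rfloor> = p (\<lfloor>u / h\<rfloor> + n)" by simp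
qed

lemma sf_grid: "h > 0 \<Longrightarrow> sf h p (of_int i * h) = p i"
  unfolding sf_def by simp

lemma sf_Delta_bar: assumes "h > 0" "Cpath E C p" shows "sf h p \<in> Delta_bar E h"
  unfolding Delta_bar_def bi_paths_def
proof (intro CollectI conjI allI impI)
  fix n :: int and t assume "of_int n * h \<le> t \<and> t < of_int (n + 1) * h"
  then show "sf h p t = sf h p (of_int n * h)" using floor_blk[OF assms(1)] sf_grid[OF assms(1)]
    unfolding sf_def by auto
next
  fix i :: int
  show "(sf h p (of_int i * h), sf h p (of_int (i + 1) * h)) \<in> E"
    using assms unfolding Cpath_def by (simp only: sf_grid) blast
qed

lemma Delta_bar_sf: assumes "h > 0" "x \<in> Delta_bar E h"
  shows "x = sf h (\<lambda>i. x (of_int i * h))"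
proof
  fix t
  have "x t = x (of_int \<lfloor>t / h\<rfloor> * h)" using assms floor_blk2[OF assms(1), of t]
    unfolding Delta_bar_def by blast
  then show "x t = sf h (\<lambda>i. x (of_int i * h)) t" unfolding sf_def by simp
qed

lemma lift_iff: assumes h: "h > 0"
  shows "f \<in> lift E h C \<longleftrightarrow> (\<exists>p s. Cpath E C p \<and> f = (\<lambda>u. sf h p (u + s)))"
proof
  assume "f \<in> lift E h C"
  then obtain x t where x: "x \<in> Delta_bar E h" and f: "f = (\<lambda>s. x (s + t))" and fC: "\<forall>u. f u \<in> C"
    unfolding lift_def Delta_def by blast
  define p where "p = (\<lambda>i::int. x (of_int i * h))"
  have xs: "x = sf h p" using Delta_bar_sf[OF h x] p_def by simp
  have xC: "x u \<in> C" for u using fC f by (metis diff_add_cancel)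
  have "(p i, p (i + 1)) \<in> E" for i using x unfolding Delta_bar_def bi_paths_def p_def by auto
  then have "Cpath E C p" unfolding Cpath_def p_def using xC by auto
  then show "\<exists>p s. Cpath E C p \<and> f = (\<lambda>u. sf h p (u + s))" using f xs by blast
next
  assume "\<exists>p s. Cpath E C p \<and> f = (\<lambda>u. sf h p (u + s))"
  then obtain p s where p: "Cpath E C p" and f: "f = (\<lambda>u. sf h p (u + s))" by blast
  have "f \<in> Delta E h" unfolding Delta_def using sf_Delta_bar[OF h p] f by blast
  moreover have "f u \<in> C" for u using p unfolding f sf_def Cpath_def by blast
  ultimately show "f \<in> lift E h C" unfolding lift_def by blast
qed

lemma psi_sf: "psi t (\<lambda>u. sf h p (u + s)) = (\<lambda>u. sf h p (u + (s + t)))"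
  unfolding psi_def by (rule ext) (simp add: ac_simps)

definition Mb :: "real \<Rightarrow> real \<Rightarrow> nat \<Rightarrow> nat" where
  "Mb h s N = N + 1 + nat \<lceil>\<bar>s\<bar> / h\<rceil>"

lemma agree_dist:
  assumes h: "h > 0" and ag: "\<And>i. \<bar>i\<bar> \<le> int (Mb h s N) \<Longrightarrow> p i = q i"
  shows "dist_Delta h (\<lambda>u. sf h p (u + s)) (\<lambda>u. sf h q (u + s)) \<le> (1/2)^N * S2"
proof (rule dist_upper[OF h])
  fix u assume u1: "- real N * h \<le> u" and u2: "u \<le> (real N + 1) * h"
  define M where "M = Mb h s N"
  have c: "\<bar>s\<bar> / h \<le> of_int \<lceil>\<bar>s\<bar> / h\<rceil>" by simp
  have "\<bar>s\<bar> \<le> of_int \<lceil>\<bar>s\<bar> / h\<rceil> * h" using mult_right_mono[OF c, of h] h by simp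
  moreover have "0 \<le> \<bar>s\<bar> / h" using h by simp
  then have "0 \<le> \<lceil>\<bar>s\<bar> / h\<rceil>" by linarith
  ultimately have sM: "\<bar>s\<bar> \<le> real (nat \<lceil>\<bar>s\<bar> / h\<rceil>) * h" by simp
  have M: "real M = real N + 1 + real (nat \<lceil>\<bar>s\<bar> / h\<rceil>)" unfolding M_def Mb_def by simp
  let ?k = "\<lfloor>(u + s) / h\<rfloor>"
  have k: "of_int ?k * h \<le> u + s" "u + s < of_int (?k + 1) * h" using floor_blk2[OF h] by auto
  have "of_int ?k * h < (real M + 1) * h" using k u2 sM M h by (simp add: algebra_simps; linarith)
  then have "of_int ?k < real M + 1" using h by simp
  then have k1: "?k \<le> int M" by linarith
  have "- real M * h < of_int (?k + 1) * h" using k u1 sM M h by (simp add: algebra_simps; linarith)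
  then have "- real M < of_int (?k + 1)" using h by (simp only: mult_less_cancel_right)
  then have k2: "- int M \<le> ?k" by linarith
  show "sf h p (u + s) = sf h q (u + s)" unfolding sf_def using ag k1 k2 M_def by auto
qed

lemma dist_after:
  assumes h: "h > 0" and d: "p n \<noteq> q n"
  shows "1 \<le> dist_Delta h (\<lambda>u. sf h p (u + of_int n * h)) (\<lambda>u. sf h q (u + of_int n * h))"
proof (rule dist_lower[OF h])
  fix u assume "0 \<le> u" "u < h"
  then have "\<lfloor>(u + of_int n * h) / h\<rfloor> = n" using h by (intro floor_blk) (auto simp: algebra_simps)
  then show "sf h p (u + of_int n * h) \<noteq> sf h q (u + of_int n * h)" unfolding sf_def using d by simp
qed



lemma scc_conn:
  assumes "scc E C" "u \<in> C" "v \<in> C"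
  shows "\<exists>n>0. \<exists>f. f 0 = u \<and> f n = v \<and> (\<forall>i<n. (f i, f (Suc i)) \<in> E \<inter> C \<times> C)"
proof -
  have "(u, v) \<in> (E \<inter> C \<times> C)\<^sup>+" using assms unfolding scc_def strongly_connected_in_def by blast
  then obtain n where "n > 0" "(u, v) \<in> (E \<inter> C \<times> C) ^^ n" using trancl_power by blast
  then show ?thesis using relpow_fun_conv by metis
qed

lemma succ_ex: assumes "scc E C" "u \<in> C" shows "\<exists>w. (u, w) \<in> E \<inter> C \<times> C"
proof -
  obtain n f where "n > 0" "f 0 = u" "\<forall>i<n. (f i, f (Suc i)) \<in> E \<inter> C \<times> C"
    using scc_conn[OF assms assms(2)] by blast
  then show ?thesis by metis
qed

lemma pred_ex: assumes "scc E C" "u \<in> C" shows "\<exists>w. (w, u) \<in> E \<inter> C \<times> C"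
proof -
  obtain n f where "n > 0" "f n = u" "\<forall>i<n. (f i, f (Suc i)) \<in> E \<inter> C \<times> C"
    using scc_conn[OF assms assms(2)] by blast
  note st = this
  have "n - 1 < n" using st(1) by simp
  then have "(f (n - 1), f (Suc (n - 1))) \<in> E \<inter> C \<times> C" using st(3) by blast
  moreover have "Suc (n - 1) = n" using st(1) by simp
  ultimately show ?thesis using st(2) by auto
qed

primrec fwd :: "('v \<times> 'v) set \<Rightarrow> 'v \<Rightarrow> nat \<Rightarrow> 'v" where
  "fwd R u 0 = u"
| "fwd R u (Suc n) = (SOME w. (fwd R u n, w) \<in> R)"

primrec bwd :: "('v \<times> 'v) set \<Rightarrow> 'v \<Rightarrow> nat \<Rightarrow> 'v" where
  "bwd R u 0 = u"
| "bwd R u (Suc n) = (SOME w. (w, bwd R u n) \<in> R)"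

lemma fwd_step: assumes "scc E C" "u \<in> C"
  shows "(fwd (E \<inter> C \<times> C) u n, fwd (E \<inter> C \<times> C) u (Suc n)) \<in> E \<inter> C \<times> C"
proof -
  have "fwd (E \<inter> C \<times> C) u n \<in> C" for n
  proof (induction n)
    case 0 then show ?case using assms by simp
  next
    case (Suc n)
    then have "\<exists>w. (fwd (E \<inter> C \<times> C) u n, w) \<in> E \<inter> C \<times> C" using succ_ex[OF assms(1)] by blast
    then show ?case by simp (metis (no_types, lifting) IntD2 SigmaD2 someI_ex)
  qed
  then have "\<exists>w. (fwd (E \<inter> C \<times> C) u n, w) \<in> E \<inter> C \<times> C" using succ_ex[OF assms(1)] by blast
  then show ?thesis by simp (rule someI_ex)
qed

lemma bwd_step: assumes "scc E C" "u \<in> C"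
  shows "(bwd (E \<inter> C \<times> C) u (Suc n), bwd (E \<inter> C \<times> C) u n) \<in> E \<inter> C \<times> C"
proof -
  have "bwd (E \<inter> C \<times> C) u n \<in> C" for n
  proof (induction n)
    case 0 then show ?case using assms by simp
  next
    case (Suc n)
    then have "\<exists>w. (w, bwd (E \<inter> C \<times> C) u n) \<in> E \<inter> C \<times> C" using pred_ex[OF assms(1)] by blast
    then show ?case by simp (metis (no_types, lifting) IntD2 SigmaD1 someI_ex)
  qed
  then have "\<exists>w. (w, bwd (E \<inter> C \<times> C) u n) \<in> E \<inter> C \<times> C" using pred_ex[OF assms(1)] by blast
  then show ?thesis by simp (rule someI_ex)
qed

definition fseq :: "('v \<times> 'v) set \<Rightarrow> (nat \<Rightarrow> 'v) \<Rightarrow> bool" where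
  "fseq R g \<longleftrightarrow> (\<forall>n. (g n, g (Suc n)) \<in> R)"

lemma splice_Cpath:
  assumes p: "Cpath E C p" and g: "fseq (E \<inter> C \<times> C) g" and g0: "g 0 = p M"
  shows "Cpath E C (\<lambda>i. if i \<le> M then p i else g (nat (i - M)))"
  unfolding Cpath_def
proof
  fix i :: int
  consider "i < M" | "i = M" | "i > M" by linarith
  then show "((if i \<le> M then p i else g (nat (i - M))), (if i + 1 \<le> M then p (i + 1) else g (nat (i + 1 - M)))) \<in> E \<inter> C \<times> C"
  proof cases
    case 1
    have "(p i, p (i + 1)) \<in> E \<inter> C \<times> C" using p unfolding Cpath_def by blast
    moreover have "i \<le> M" "i + 1 \<le> M" using 1 by auto
    ultimately show ?thesis by (simp only: if_True)
  next
    case 2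
    have "(g 0, g (Suc 0)) \<in> E \<inter> C \<times> C" using g unfolding fseq_def by blast
    moreover have "nat (i + 1 - M) = Suc 0" using 2 by simp
    moreover have "i \<le> M" "\<not> i + 1 \<le> M" using 2 by auto
    ultimately show ?thesis using 2 g0 by (simp only: if_True if_False)
  next
    case 3
    have "(g (nat (i - M)), g (Suc (nat (i - M)))) \<in> E \<inter> C \<times> C" using g unfolding fseq_def by blast
    moreover have "nat (i + 1 - M) = Suc (nat (i - M))" using 3 by simp
    moreover have "\<not> i \<le> M" "\<not> i + 1 \<le> M" using 3 by auto
    ultimately show ?thesis by (simp only: if_False)
  qed
qed

lemma cat_fseq:
  assumes f: "\<forall>i<n. (f i, f (Suc i)) \<in> R" and g: "fseq R g" and fn: "f n = g 0"
  shows "fseq R (\<lambda>j. if j \<le> n then f j else g (j - n))"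
  unfolding fseq_def
proof
  fix j
  consider "j < n" | "j = n" | "j > n" by linarith
  then show "((if j \<le> n then f j else g (j - n)), (if Suc j \<le> n then f (Suc j) else g (Suc j - n))) \<in> R"
  proof cases
    case 1
    have "(f j, f (Suc j)) \<in> R" using f 1 by blast
    moreover have "j \<le> n" "Suc j \<le> n" using 1 by auto
    ultimately show ?thesis by (simp only: if_True)
  next
    case 2
    have "(g 0, g (Suc 0)) \<in> R" using g unfolding fseq_def by blast
    moreover have "Suc j - n = Suc 0" using 2 by simp
    moreover have "j \<le> n" "\<not> Suc j \<le> n" using 2 by auto
    ultimately show ?thesis using 2 fn by (simp only: if_True if_False)
  next
    case 3
    have "(g (j - n), g (Suc (j - n))) \<in> R" using g unfolding fseq_def by blast
    moreover have "Suc j - n = Suc (j - n)" using 3 by simp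
    moreover have "\<not> j \<le> n" "\<not> Suc j \<le> n" using 3 by auto
    ultimately show ?thesis by (simp only: if_False)
  qed
qed

lemma Cpath_C: "Cpath E C p \<Longrightarrow> p i \<in> C"
  unfolding Cpath_def by blast

lemma outdeg_other:
  assumes "out_degree_in E C v > 1"
  shows "\<exists>w\<in>C. (v, w) \<in> E \<and> w \<noteq> z"
proof (rule ccontr)
  assume "\<not> ?thesis"
  then have "{w \<in> C. (v, w) \<in> E} \<subseteq> {z}" by blast
  then have "card {w \<in> C. (v, w) \<in> E} \<le> card {z}" by (intro card_mono) auto
  then show False using assms unfolding out_degree_in_def by simp
qed

lemma sens_comb:
  assumes scc: "scc E C" and v: "v \<in> C" "out_degree_in E C v > 1" and p: "Cpath E C p"
  shows "\<exists>q n. Cpath E C q \<and> (\<forall>i \<le> M. q i = p i) \<and> n > M \<and> q n \<noteq> p n"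
proof -
  let ?R = "E \<inter> C \<times> C"
  obtain a f where a: "a > 0" "f 0 = p M" "f a = v" "\<forall>i<a. (f i, f (Suc i)) \<in> ?R"
    using scc_conn[OF scc Cpath_C[OF p] v(1)] by blast
  obtain w where w: "w \<in> C" "(v, w) \<in> E" "w \<noteq> p (M + int a + 1)" using outdeg_other[OF v(2)] by blast
  define g2 where "g2 = (\<lambda>j. if j = 0 then v else fwd ?R w (j - 1))"
  have g2fs: "fseq ?R g2" unfolding g2_def fseq_def
  proof
    fix n show "((if n = 0 then v else fwd ?R w (n - 1)), (if Suc n = 0 then v else fwd ?R w (Suc n - 1))) \<in> ?R"
      using fwd_step[OF scc w(1), of "n - 1"] w v by (cases n) auto
  qed
  have g: "fseq ?R (\<lambda>j. if j \<le> a then f j else g2 (j - a))"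
    by (rule cat_fseq[OF a(4) g2fs]) (simp add: g2_def a(3))
  define g where "g = (\<lambda>j. if j \<le> a then f j else g2 (j - a))"
  define q where "q = (\<lambda>i. if i \<le> M then p i else g (nat (i - M)))"
  have "Cpath E C q" unfolding q_def by (rule splice_Cpath[OF p]) (use g a in \<open>auto simp: g_def\<close>)
  moreover have "q (M + int a + 1) = w"
  proof -
    have "nat (M + int a + 1 - M) = Suc a" by simp
    then show ?thesis unfolding q_def g_def g2_def by simp
  qed
  moreover have "\<forall>i \<le> M. q i = p i" unfolding q_def by simp
  moreover have "M + int a + 1 > M" by simp
  ultimately show ?thesis using w(3) by blast
qed



lemma per_comb:
  assumes scc: "scc E C" and p: "Cpath E C p"
  shows "\<exists>q L. L > 0 \<and> Cpath E C q \<and> (\<forall>i. q (i + L) = q i) \<and> (\<forall>i. \<bar>i\<bar> \<le> int M \<longrightarrow> q i = p i)"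
proof -
  let ?R = "E \<inter> C \<times> C"
  obtain b f where b: "b > 0" "f 0 = p M" "f b = p (- M)" "\<forall>i<b. (f i, f (Suc i)) \<in> ?R"
    using scc_conn[OF scc Cpath_C[OF p] Cpath_C[OF p]] by blast
  define c where "c = (\<lambda>j. if j \<le> 2*M then p (int j - int M) else f (j - 2*M))"
  define L where "L = 2*M + b"
  have cstep: "(c r, c (Suc r)) \<in> ?R" if r: "r < L" for r
  proof (cases "r < 2*M")
    case True
    then have "c r = p (int r - int M)" "c (Suc r) = p (int r - int M + 1)" unfolding c_def by (auto simp: algebra_simps)
    then show ?thesis using p unfolding Cpath_def by simp
  next
    case False
    then have "c r = f (r - 2*M)" unfolding c_def using b(2) by auto
    moreover have "c (Suc r) = f (Suc (r - 2*M))" unfolding c_def using False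
      by (simp add: Suc_diff_le)
    moreover have "r - 2*M < b" using r False unfolding L_def by simp
    ultimately show ?thesis using b(4) by simp
  qed
  have cL: "c L = c 0" unfolding c_def L_def using b by simp
  define q where "q = (\<lambda>i. c (nat ((i + int M) mod int L)))"
  have Lpos: "int L > 0" unfolding L_def using b by simp
  have "Cpath E C q" unfolding Cpath_def
  proof
    fix i :: int
    define r where "r = (i + int M) mod int L"
    have r: "0 \<le> r" "r < int L" using Lpos unfolding r_def by auto
    have e: "(i + 1 + int M) mod int L = (r + 1) mod int L" unfolding r_def by (simp add: mod_simps ac_simps)
    show "(q i, q (i + 1)) \<in> ?R"
    proof (cases "r + 1 < int L")
      case True
      then have "(i + 1 + int M) mod int L = r + 1" using e r by simp
      then have "q (i + 1) = c (nat (r + 1))" unfolding q_def by (simp add: ac_simps)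
      moreover have "nat (r + 1) = Suc (nat r)" using r by simp
      ultimately have "q (i + 1) = c (Suc (nat r))" by simp
      moreover have "q i = c (nat r)" unfolding q_def r_def by simp
      ultimately show ?thesis using cstep[of "nat r"] r by simp
    next
      case False
      then have rL: "r + 1 = int L" using r by simp
      then have "(i + 1 + int M) mod int L = 0" using e by simp
      then have "q (i + 1) = c 0" unfolding q_def by (simp add: ac_simps)
      have "int (Suc (nat r)) = int L" using rL r by simp
      then have "Suc (nat r) = L" by (simp only: of_nat_eq_iff)
      then have "c 0 = c (Suc (nat r))" using cL by simp
      then have "q (i + 1) = c (Suc (nat r))" using \<open>q (i + 1) = c 0\<close> by simp
      then show ?thesis using cstep[of "nat r"] r unfolding q_def r_def by simp
    qed
  qed
  moreover have "\<forall>i. q (i + int L) = q i"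
  proof
    fix i :: int
    have e: "i + int L + int M = (i + int M) + int L" by simp
    show "q (i + int L) = q i" unfolding q_def by (simp only: e mod_add_self2)
  qed
  moreover have "\<forall>i. \<bar>i\<bar> \<le> int M \<longrightarrow> q i = p i"
  proof (intro allI impI)
    fix i :: int assume i: "\<bar>i\<bar> \<le> int M"
    then have "(i + int M) mod int L = i + int M" using b unfolding L_def by (intro mod_pos_pos_trivial) auto
    moreover have "nat (i + int M) \<le> 2 * M" using i by simp
    moreover have "int (nat (i + int M)) - int M = i" using i by simp
    ultimately show "q i = p i" unfolding q_def c_def by simp
  qed
  ultimately show ?thesis using Lpos by (intro exI[of _ q] exI[of _ "int L"]) (simp only: simp_thms)
qed



definition lw :: "('v \<times> 'v) set \<Rightarrow> 'v set \<Rightarrow> 'v list \<Rightarrow> bool" where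
  "lw E C ws \<longleftrightarrow> ws \<noteq> [] \<and> set ws \<subseteq> C \<and> successively (\<lambda>a b. (a, b) \<in> E) ws"

lemma lw_append: assumes "lw E C xs" "lw E C (last xs # ys)" shows "lw E C (xs @ ys)"
proof -
  have "successively (\<lambda>a b. (a, b) \<in> E) ys" "ys = [] \<or> (last xs, hd ys) \<in> E"
    using assms(2) unfolding lw_def by (auto simp: successively_Cons)
  then show ?thesis using assms unfolding lw_def by (auto simp: successively_append_iff)
qed

lemma lw_last: "lw E C xs \<Longrightarrow> last xs \<in> C"
  unfolding lw_def by auto

lemma conn_word:
  assumes scc: "scc E C" and a: "a \<in> C" and w: "lw E C w"
  shows "\<exists>ys. lw E C (a # ys @ w)"
proof -
  have b: "hd w \<in> C" using w unfolding lw_def by auto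
  obtain n f where nf: "n > 0" "f 0 = a" "f n = hd w" "\<forall>i<n. (f i, f (Suc i)) \<in> E \<inter> C \<times> C"
    using scc_conn[OF scc a b] by blast
  define whole where "whole = map f [0..<Suc n]"
  have fC: "f i \<in> C" if "i \<le> n" for i
  proof (cases "i < n")
    case True then show ?thesis using nf(4) by blast
  next
    case False then show ?thesis using that nf(3) b by (metis le_neq_implies_less)
  qed
  have lww: "lw E C whole" unfolding lw_def whole_def
  proof (intro conjI)
    show "map f [0..<Suc n] \<noteq> []" by simp
    show "set (map f [0..<Suc n]) \<subseteq> C" using fC by auto
    show "successively (\<lambda>a b. (a, b) \<in> E) (map f [0..<Suc n])"
      unfolding successively_conv_nth using nf(4) by (auto simp del: upt_Suc)
  qed
  have wh: "whole = (a # map f [1..<n]) @ [hd w]"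
  proof -
    have "[0..<Suc n] = [0..<n] @ [n]" by simp
    moreover have "[0..<n] = 0 # [1..<n]" using nf(1) by (simp add: upt_conv_Cons)
    ultimately show ?thesis unfolding whole_def using nf by simp
  qed
  have "last whole # tl w = w" using wh w unfolding lw_def by simp
  then have "lw E C (whole @ tl w)" using lw_append[OF lww] w by simp
  moreover have "whole @ tl w = a # map f [1..<n] @ w" using wh w unfolding lw_def by simp
  ultimately show ?thesis by auto
qed

definition Wd :: "('v::finite \<times> 'v) set \<Rightarrow> 'v set \<Rightarrow> 'v \<Rightarrow> nat \<Rightarrow> 'v list" where
  "Wd E C c0 k = (let w = from_nat (fst (prod_decode k)) in if lw E C w then w else [c0])"

definition cn :: "('v \<times> 'v) set \<Rightarrow> 'v set \<Rightarrow> 'v \<Rightarrow> 'v list \<Rightarrow> 'v list" where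
  "cn E C a w = (SOME ys. lw E C (a # ys @ w))"

primrec LL :: "('v::finite \<times> 'v) set \<Rightarrow> 'v set \<Rightarrow> 'v \<Rightarrow> nat \<Rightarrow> 'v list" where
  "LL E C c0 0 = [c0]"
| "LL E C c0 (Suc k) = LL E C c0 k @ cn E C (last (LL E C c0 k)) (Wd E C c0 k) @ Wd E C c0 k"

lemma Wd_lw: "c0 \<in> C \<Longrightarrow> lw E C (Wd E C c0 k)"
  unfolding Wd_def Let_def lw_def by auto

lemma LL_lw: assumes scc: "scc E C" and c0: "c0 \<in> C" shows "lw E C (LL E C c0 k)"
proof (induction k)
  case 0 then show ?case using c0 unfolding lw_def by simp
next
  case (Suc k)
  let ?a = "last (LL E C c0 k)" and ?w = "Wd E C c0 k"
  have "\<exists>ys. lw E C (?a # ys @ ?w)" using conn_word[OF scc lw_last[OF Suc.IH] Wd_lw[OF c0]] .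
  then have "lw E C (?a # cn E C ?a ?w @ ?w)" unfolding cn_def by (rule someI_ex)
  then show ?case using lw_append[OF Suc.IH] by simp
qed

lemma LL_len: "Suc k \<le> length (LL E C c0 k)"
proof (induction k)
  case 0 then show ?case by simp
next
  case (Suc k)
  have "Wd E C c0 k \<noteq> []" unfolding Wd_def Let_def lw_def by auto
  then have "length (Wd E C c0 k) \<ge> 1" by (cases "Wd E C c0 k") auto
  then show ?case using Suc by simp
qed

lemma LL_mono_len: "length (LL E C c0 k) \<le> length (LL E C c0 (k + d))"
  by (induction d) auto

lemma LL_prefix: "i < length (LL E C c0 k) \<Longrightarrow> LL E C c0 (k + d) ! i = LL E C c0 k ! i"
proof (induction d)
  case 0 then show ?case by simp
next
  case (Suc d)
  have "i < length (LL E C c0 (k + d))"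
    using Suc.prems LL_mono_len[of E C c0 k d] by linarith
  then show ?case using Suc by (simp add: nth_append)
qed

definition GG :: "('v::finite \<times> 'v) set \<Rightarrow> 'v set \<Rightarrow> 'v \<Rightarrow> nat \<Rightarrow> 'v" where
  "GG E C c0 i = LL E C c0 (Suc i) ! i"

lemma GG_eq: assumes "i < length (LL E C c0 k)" shows "GG E C c0 i = LL E C c0 k ! i"
proof (cases "Suc i \<le> k")
  case True
  have "i < length (LL E C c0 (Suc i))" using LL_len[of i E C c0] by simp
  then have "LL E C c0 (Suc i + (k - Suc i)) ! i = LL E C c0 (Suc i) ! i" by (rule LL_prefix)
  then show ?thesis unfolding GG_def using True by simp
next
  case False
  have "LL E C c0 (k + (Suc i - k)) ! i = LL E C c0 k ! i" using assms by (rule LL_prefix)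
  then show ?thesis unfolding GG_def using False by simp
qed

lemma GG_step: assumes scc: "scc E C" and c0: "c0 \<in> C"
  shows "(GG E C c0 i, GG E C c0 (Suc i)) \<in> E \<inter> C \<times> C"
proof -
  let ?L = "LL E C c0 (Suc (Suc i))"
  have len: "Suc (Suc i) < length ?L" using LL_len[of "Suc (Suc i)" E C c0] by simp
  have e1: "GG E C c0 i = ?L ! i" by (rule GG_eq) (use len in linarith)
  have e2: "GG E C c0 (Suc i) = ?L ! Suc i" by (rule GG_eq) (use len in linarith)
  have lw: "lw E C ?L" by (rule LL_lw[OF scc c0])
  then have "(?L ! i, ?L ! Suc i) \<in> E" unfolding lw_def using len
    by (intro successively_nth[where P="\<lambda>a b. (a, b) \<in> E"]) (auto simp del: LL.simps)
  moreover have "?L ! i \<in> set ?L" "?L ! Suc i \<in> set ?L" by (rule nth_mem, use len in linarith)+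
  then have "?L ! i \<in> C" "?L ! Suc i \<in> C" using lw unfolding lw_def by auto
  ultimately show ?thesis using e1 e2 by simp
qed

lemma GG_occ: assumes c0: "c0 \<in> C" and w: "lw E C w"
  shows "\<exists>n0 \<ge> K. \<forall>j < length w. GG E C c0 (n0 + j) = w ! j"
proof -
  define k where "k = prod_encode (to_nat w, K)"
  have Wk: "Wd E C c0 k = w" unfolding Wd_def k_def using w by simp
  define n0 where "n0 = length (LL E C c0 k) + length (cn E C (last (LL E C c0 k)) w)"
  have "K \<le> k" unfolding k_def by (rule le_prod_encode_2)
  then have K: "K \<le> n0" unfolding n0_def using LL_len[of k E C c0] by simp
  have "GG E C c0 (n0 + j) = w ! j" if j: "j < length w" for j
  proof -
    have L: "LL E C c0 (Suc k) = LL E C c0 k @ cn E C (last (LL E C c0 k)) w @ w" using Wk by simp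
    have "n0 + j < length (LL E C c0 (Suc k))" using L j unfolding n0_def by simp
    then have "GG E C c0 (n0 + j) = LL E C c0 (Suc k) ! (n0 + j)" by (rule GG_eq)
    also have "\<dots> = w ! j" unfolding L n0_def by (simp add: nth_append)
    finally show ?thesis .
  qed
  then show ?thesis using K by blast
qed

lemma trans_comb: fixes E :: "('v::finite \<times> 'v) set" assumes scc: "scc E C"
  shows "\<exists>q. Cpath E C q \<and> (\<forall>p. Cpath E C p \<longrightarrow> (\<forall>M::nat. \<forall>K::nat. \<exists>n::int. n \<ge> int K \<and> (\<forall>i. \<bar>i\<bar> \<le> int M \<longrightarrow> q (n + i) = p i)))"
proof -
  obtain c0 where c0: "c0 \<in> C" using scc unfolding scc_def by blast
  let ?R = "E \<inter> C \<times> C"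
  define G where "G = GG E C c0"
  have Gs: "(G i, G (Suc i)) \<in> ?R" for i unfolding G_def by (rule GG_step[OF scc c0])
  have G0: "G 0 \<in> C" using Gs[of 0] by blast
  define q where "q = (\<lambda>i::int. if 0 \<le> i then G (nat i) else bwd ?R (G 0) (nat (- i)))"
  have "Cpath E C q" unfolding Cpath_def
  proof
    fix i :: int
    consider "0 \<le> i" | "i = -1" | "i < -1" by linarith
    then show "(q i, q (i + 1)) \<in> ?R"
    proof cases
      case 1
      then have "q i = G (nat i)" "q (i + 1) = G (Suc (nat i))" unfolding q_def by (auto simp: nat_add_distrib)
      then show ?thesis using Gs by simp
    next
      case 2
      then have e: "q i = bwd ?R (G 0) (Suc 0)" "q (i + 1) = bwd ?R (G 0) 0" unfolding q_def by (auto simp del: bwd.simps(2))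
      show ?thesis unfolding e by (rule bwd_step[OF scc G0])
    next
      case 3
      then have "q i = bwd ?R (G 0) (Suc (nat (- i - 1)))" "q (i + 1) = bwd ?R (G 0) (nat (- i - 1))"
        unfolding q_def by (auto simp del: bwd.simps(2) simp: nat_diff_distrib' Suc_nat_eq_nat_zadd1)
      note e = this
      show ?thesis unfolding e by (rule bwd_step[OF scc G0])
    qed
  qed
  moreover have "\<exists>n::int. n \<ge> int K \<and> (\<forall>i. \<bar>i\<bar> \<le> int M \<longrightarrow> q (n + i) = p i)"
    if p: "Cpath E C p" for p M K
  proof -
    define w where "w = map (\<lambda>j. p (int j - int M)) [0..<Suc (2 * M)]"
    have "lw E C w" unfolding lw_def w_def
    proof (intro conjI)
      show "set (map (\<lambda>j. p (int j - int M)) [0..<Suc (2 * M)]) \<subseteq> C" using Cpath_C[OF p] by auto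
      show "successively (\<lambda>a b. (a, b) \<in> E) (map (\<lambda>j. p (int j - int M)) [0..<Suc (2 * M)])"
        unfolding successively_conv_nth
      proof (intro allI impI)
        fix j assume "Suc j < length (map (\<lambda>j. p (int j - int M)) [0..<Suc (2 * M)])"
        then have j: "Suc j < Suc (2 * M)" by simp
        have "(p (int j - int M), p (int j - int M + 1)) \<in> E" using p unfolding Cpath_def by blast
        then show "(map (\<lambda>j. p (int j - int M)) [0..<Suc (2 * M)] ! j, map (\<lambda>j. p (int j - int M)) [0..<Suc (2 * M)] ! Suc j) \<in> E"
          using j by (simp del: upt_Suc add: algebra_simps)
      qed
    qed simp
    then obtain n0 where n0: "n0 \<ge> K" "\<forall>j < length w. G (n0 + j) = w ! j"
      using GG_occ[OF c0] unfolding G_def by blast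
    have "q (int n0 + int M + i) = p i" if i: "\<bar>i\<bar> \<le> int M" for i
    proof -
      define j where "j = nat (i + int M)"
      have j: "j < length w" "int j = i + int M" using i unfolding j_def w_def by auto
      have "int n0 + int M + i = int (n0 + j)" using j by simp
      then have "q (int n0 + int M + i) = G (n0 + j)" unfolding q_def by (simp only: nat_int of_nat_0_le_iff if_True)
      also have "\<dots> = w ! j" using n0 j by blast
      also have "\<dots> = p i"
      proof -
        have jl: "j < length [0..<Suc (2 * M)]" using j(1) unfolding w_def by (simp only: length_map)
        then have "w ! j = p (int ([0..<Suc (2 * M)] ! j) - int M)" unfolding w_def by (rule nth_map)
        also have "[0..<Suc (2 * M)] ! j = j" using jl by (simp del: upt_Suc)
        finally show ?thesis using j(2) by simp
      qed
      finally show ?thesis .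
    qed
    then show ?thesis using n0 by (intro exI[of _ "int n0 + int M"]) (auto simp: add.assoc)
  qed
  ultimately show ?thesis by blast
qed



lemma small_N: "e > 0 \<Longrightarrow> \<exists>N. (1/2::real)^N * S2 < e"
proof -
  assume e: "e > 0"
  have "e / (S2 + 1) > 0" using e S2_nonneg by simp
  then obtain N where N: "(1/2::real)^N < e / (S2 + 1)" using real_arch_pow_inv[of "e / (S2 + 1)" "1/2"] by auto
  have "(1/2::real)^N * S2 \<le> (1/2)^N * (S2 + 1)" by simp
  also have "\<dots> < e" using N S2_nonneg by (simp add: pos_less_divide_eq)
  finally show ?thesis by blast
qed

lemma part_sens:
  fixes E :: "('v::finite \<times> 'v) set"
  assumes h: "h > 0" and scc: "scc E C" and v: "v \<in> C" "out_degree_in E C v > 1"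
  shows "sensitive (lift E h C) (dist_Delta h) psi"
  unfolding sensitive_def
proof (intro exI[of _ "1/2"] conjI ballI allI impI)
  fix x B assume x: "x \<in> lift E h C" and B: "B \<subseteq> lift E h C \<and> (\<exists>e>0. {y \<in> lift E h C. dist_Delta h x y < e} \<subseteq> B)"
  obtain p s where p: "Cpath E C p" and xe: "x = (\<lambda>u. sf h p (u + s))" using x lift_iff[OF h] by blast
  obtain e where e: "e > 0" "{y \<in> lift E h C. dist_Delta h x y < e} \<subseteq> B" using B by blast
  obtain N where N: "(1/2::real)^N * S2 < e" using small_N[OF e(1)] by blast
  define M where "M = max (Mb h s N) (nat \<lceil>s / h\<rceil>)"
  obtain q n where q: "Cpath E C q" "\<forall>i \<le> int M. q i = p i" "n > int M" "q n \<noteq> p n"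
    using sens_comb[OF scc v p, of "int M"] by blast
  define y where "y = (\<lambda>u. sf h q (u + s))"
  have yX: "y \<in> lift E h C" using q(1) lift_iff[OF h] unfolding y_def by blast
  have "dist_Delta h x y \<le> (1/2)^N * S2" unfolding xe y_def
  proof (rule agree_dist[OF h])
    fix i :: int assume "\<bar>i\<bar> \<le> int (Mb h s N)"
    then have "i \<le> int M" unfolding M_def by simp
    then show "p i = q i" using q(2) by simp
  qed
  then have yB: "y \<in> B" using e N yX by auto
  define t where "t = of_int n * h - s"
  have t: "t > 0"
  proof -
    have "s / h \<le> of_int \<lceil>s / h\<rceil>" by simp
    also have "\<dots> \<le> of_int (int M)" unfolding M_def by linarith
    also have "\<dots> < of_int n" using q(3) by simp
    finally have "s < of_int n * h" using h by (simp add: pos_divide_less_eq)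
    then show "t > 0" unfolding t_def by simp
  qed
  note yB
  moreover note t
  moreover have "psi t x = (\<lambda>u. sf h p (u + of_int n * h))" unfolding xe psi_sf t_def by simp
  moreover have "psi t y = (\<lambda>u. sf h q (u + of_int n * h))" unfolding y_def psi_sf t_def by simp
  ultimately show "\<exists>y\<in>B. \<exists>t>0. 1/2 < dist_Delta h (psi t x) (psi t y)"
    using dist_after[OF h, of p n q] q(4) by (intro bexI[of _ y] exI[of _ t]) auto
qed simp

lemma part_dense:
  fixes E :: "('v::finite \<times> 'v) set"
  assumes h: "h > 0" and scc: "scc E C"
  shows "dense_periodic (lift E h C) (dist_Delta h) psi"
  unfolding dense_periodic_def
proof (intro ballI allI impI)
  fix x and e :: real assume x: "x \<in> lift E h C" and e: "e > 0"
  obtain p s where p: "Cpath E C p" and xe: "x = (\<lambda>u. sf h p (u + s))" using x lift_iff[OF h] by blast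
  obtain N where N: "(1/2::real)^N * S2 < e" using small_N[OF e] by blast
  obtain q L where q: "L > 0" "Cpath E C q" "\<forall>i. q (i + L) = q i" "\<forall>i. \<bar>i\<bar> \<le> int (Mb h s N) \<longrightarrow> q i = p i"
    using per_comb[OF scc p] by blast
  define y where "y = (\<lambda>u. sf h q (u + s))"
  have yX: "y \<in> lift E h C" using q(2) lift_iff[OF h] unfolding y_def by blast
  have "dist_Delta h x y \<le> (1/2)^N * S2" unfolding xe y_def
    by (rule agree_dist[OF h]) (use q(4) in auto)
  moreover have "periodic_point psi y" unfolding periodic_point_def
  proof (intro exI[of _ "of_int L * h"] conjI)
    show "of_int L * h > 0" using q(1) h by simp
    have "sf h q (u + (s + of_int L * h)) = sf h q (u + s)" for u
    proof -
      have "sf h q (u + (s + of_int L * h)) = sf h q ((u + s) + of_int L * h)" by (simp add: ac_simps)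
      also have "\<dots> = sf h (\<lambda>i. q (i + L)) (u + s)" by (rule sf_shift[OF h])
      also have "\<dots> = sf h q (u + s)" using q(3) by simp
      finally show ?thesis .
    qed
    then show "psi (of_int L * h) y = y" unfolding y_def psi_sf by simp
  qed
  ultimately show "\<exists>p\<in>lift E h C. periodic_point psi p \<and> dist_Delta h x p < e"
    using yX N by auto
qed

lemma part_trans:
  fixes E :: "('v::finite \<times> 'v) set"
  assumes h: "h > 0" and scc: "scc E C"
  shows "transitive (lift E h C) (dist_Delta h) psi"
  unfolding transitive_def
proof -
  obtain q where q: "Cpath E C q"
    "\<forall>p. Cpath E C p \<longrightarrow> (\<forall>M::nat. \<forall>K::nat. \<exists>n::int. n \<ge> int K \<and> (\<forall>i. \<bar>i\<bar> \<le> int M \<longrightarrow> q (n + i) = p i))"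
    using trans_comb[OF scc] by blast
  define x0 where "x0 = (\<lambda>u. sf h q (u + 0))"
  have x0X: "x0 \<in> lift E h C" using q(1) lift_iff[OF h] unfolding x0_def by blast
  have "lift E h C \<subseteq> omega_limit (lift E h C) (dist_Delta h) psi x0"
  proof
    fix y assume yX: "y \<in> lift E h C"
    obtain p s where p: "Cpath E C p" and ye: "y = (\<lambda>u. sf h p (u + s))" using yX lift_iff[OF h] by blast
    have "\<forall>k::nat. \<exists>n::int. n \<ge> int k \<and> (\<forall>i. \<bar>i\<bar> \<le> int (Mb h s k) \<longrightarrow> q (n + i) = p i)"
      using q(2) p by blast
    then obtain nf where nf: "\<And>k. nf k \<ge> int k" "\<And>k i. \<bar>i\<bar> \<le> int (Mb h s k) \<Longrightarrow> q (nf k + i) = p i"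
      by metis
    define t where "t = (\<lambda>k. of_int (nf k) * h + s)"
    have dk: "dist_Delta h (psi (t k) x0) y \<le> (1/2)^k * S2" for k
    proof -
      have "psi (t k) x0 = (\<lambda>u. sf h (\<lambda>i. q (i + nf k)) (u + s))"
      proof
        fix u
        have "psi (t k) x0 u = sf h q ((u + s) + of_int (nf k) * h)"
          unfolding x0_def psi_sf t_def by (simp add: ac_simps)
        also have "\<dots> = sf h (\<lambda>i. q (i + nf k)) (u + s)" by (rule sf_shift[OF h])
        finally show "psi (t k) x0 u = sf h (\<lambda>i. q (i + nf k)) (u + s)" .
      qed
      moreover have "dist_Delta h (\<lambda>u. sf h (\<lambda>i. q (i + nf k)) (u + s)) (\<lambda>u. sf h p (u + s)) \<le> (1/2)^k * S2"
        by (rule agree_dist[OF h]) (metis nf(2) add.commute)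
      ultimately show ?thesis unfolding ye by simp
    qed
    have "filterlim t at_top sequentially"
      unfolding filterlim_at_top
    proof
      fix Z :: real
      show "\<forall>\<^sub>F k in sequentially. Z \<le> t k"
      proof (rule eventually_sequentiallyI[of "nat \<lceil>(Z - s) / h\<rceil>"])
        fix k assume k: "nat \<lceil>(Z - s) / h\<rceil> \<le> k"
        have "(Z - s) / h \<le> real k" using k by linarith
        then have "Z - s \<le> real k * h" using h by (simp add: pos_divide_le_eq)
        also have "\<dots> \<le> of_int (nf k) * h" using nf(1)[of k] h by (intro mult_right_mono) auto
        finally show "Z \<le> t k" unfolding t_def by simp
      qed
    qed
    moreover have "(\<lambda>k. dist_Delta h (psi (t k) x0) y) \<longlonglongrightarrow> 0"
    proof (rule tendsto_sandwich[of "\<lambda>k. 0" _ _ "\<lambda>k. (1/2::real)^k * S2"])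
      show "\<forall>\<^sub>F k in sequentially. 0 \<le> dist_Delta h (psi (t k) x0) y" by (rule always_eventually, rule allI, rule dist_nonneg[OF h])
      show "\<forall>\<^sub>F k in sequentially. dist_Delta h (psi (t k) x0) y \<le> (1/2)^k * S2" by (rule always_eventually, rule allI, rule dk)
      have "(\<lambda>k. (1/2::real)^k * S2) \<longlonglongrightarrow> 0 * S2"
        by (intro tendsto_mult LIMSEQ_power_zero tendsto_const) simp
      then show "(\<lambda>k. (1/2::real)^k * S2) \<longlonglongrightarrow> 0" by simp
    qed simp
    ultimately show "y \<in> omega_limit (lift E h C) (dist_Delta h) psi x0"
      unfolding omega_limit_def using yX by blast
  qed
  moreover have "omega_limit (lift E h C) (dist_Delta h) psi x0 \<subseteq> lift E h C"
    unfolding omega_limit_def by blast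
  ultimately show "\<exists>x\<in>lift E h C. omega_limit (lift E h C) (dist_Delta h) psi x = lift E h C"
    using x0X by blast
qed



definition sc :: "('v \<times> 'v) set \<Rightarrow> 'v set \<Rightarrow> 'v \<Rightarrow> 'v" where
  "sc E C v = (THE w. w \<in> C \<and> (v, w) \<in> E)"

lemma sc_iff:
  assumes d: "\<forall>v\<in>C. out_degree_in E C v = 1" and v: "v \<in> C"
  shows "(w \<in> C \<and> (v, w) \<in> E) \<longleftrightarrow> w = sc E C v"
proof -
  have "card {w \<in> C. (v, w) \<in> E} = 1" using d v unfolding out_degree_in_def by blast
  then obtain z where z: "{w \<in> C. (v, w) \<in> E} = {z}" using card_1_singletonE by blast
  then have iff: "\<And>w. (w \<in> C \<and> (v, w) \<in> E) \<longleftrightarrow> w = z" by blast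
  have "sc E C v = z" unfolding sc_def iff by simp
  then show ?thesis using iff by simp
qed

lemma sc_C: assumes d: "\<forall>v\<in>C. out_degree_in E C v = 1" and v: "v \<in> C" shows "sc E C v \<in> C \<and> (v, sc E C v) \<in> E"
  using sc_iff[OF d v, of "sc E C v"] by simp

lemma Cpath_sc: assumes d: "\<forall>v\<in>C. out_degree_in E C v = 1" and q: "Cpath E C q" shows "q (i + 1) = sc E C (q i)"
proof -
  have "(q i, q (i + 1)) \<in> E \<inter> C \<times> C" using q unfolding Cpath_def by blast
  then have a: "q i \<in> C" "q (i + 1) \<in> C" "(q i, q (i + 1)) \<in> E" by auto
  show ?thesis using sc_iff[OF d a(1), of "q (i + 1)"] a by simp
qed

lemma reach:
  assumes d: "\<forall>v\<in>C. out_degree_in E C v = 1" and c: "c \<in> C" and cv: "(c, v) \<in> (E \<inter> C \<times> C)\<^sup>+"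
  shows "\<exists>k>0. v = (sc E C ^^ k) c"
  using cv
proof (induction rule: trancl_induct)
  case (base y)
  then have "y \<in> C \<and> (c, y) \<in> E" by auto
  then have "y = sc E C c" using sc_iff[OF d c, of y] by simp
  then show ?case by (intro exI[of _ 1]) auto
next
  case (step y z)
  then obtain k where k: "k > 0" "y = (sc E C ^^ k) c" by blast
  have yz: "y \<in> C" "z \<in> C \<and> (y, z) \<in> E" using step(2) by auto
  have "z = sc E C y" using sc_iff[OF d yz(1), of z] yz(2) by simp
  then show ?case using k by (intro exI[of _ "Suc k"]) auto
qed

lemma funpow_C: assumes d: "\<forall>v\<in>C. out_degree_in E C v = 1" and c: "c \<in> C" shows "(sc E C ^^ k) c \<in> C"
proof (induction k)
  case 0 then show ?case using c by simp
next
  case (Suc k) then show ?case using sc_C[OF d Suc.IH] by simp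
qed

lemma funpow_mod:
  assumes L: "(f ^^ L) c = c" shows "(f ^^ n) c = (f ^^ (n mod L)) c"
proof -
  have "(f ^^ (m * L)) c = c" for m
    by (induction m) (simp_all add: funpow_add L)
  have "(f ^^ (n mod L + (n div L) * L)) c = (f ^^ (n mod L)) ((f ^^ ((n div L) * L)) c)"
    by (simp only: funpow_add o_apply)
  also have "\<dots> = (f ^^ (n mod L)) c" using \<open>\<And>m. (f ^^ (m * L)) c = c\<close> by simp
  finally show ?thesis by (simp only: mod_div_mult_eq)
qed

lemma part2:
  fixes E :: "('v::finite \<times> 'v) set"
  assumes h: "h > 0" and scc: "scc E C" and d: "\<forall>v\<in>C. out_degree_in E C v = 1"
  shows "\<exists>x\<in>lift E h C. periodic_point psi x \<and> lift E h C = {psi t x | t. True}"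
proof -
  let ?f = "sc E C"
  obtain c where c: "c \<in> C" using scc unfolding scc_def by blast
  have "(c, c) \<in> (E \<inter> C \<times> C)\<^sup>+" using scc c unfolding scc_def strongly_connected_in_def by blast
  then obtain L where L0: "L > 0" "c = (?f ^^ L) c" using reach[OF d c] by blast
  then have L: "L > 0" "(?f ^^ L) c = c" by simp_all
  define p where "p = (\<lambda>i::int. (?f ^^ nat (i mod int L)) c)"
  have pC: "p i \<in> C" for i unfolding p_def by (rule funpow_C[OF d c])
  have pstep: "p (i + 1) = ?f (p i)" for i
  proof -
    have m0: "0 \<le> i mod int L" using L by simp
    have "int (Suc (nat (i mod int L)) mod L) = (i mod int L + 1) mod int L"
      using m0 by (simp add: of_nat_mod ac_simps)
    also have "\<dots> = (i + 1) mod int L" by (simp add: mod_simps)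
    finally have e1: "int (Suc (nat (i mod int L)) mod L) = (i + 1) mod int L" .
    have "int (nat ((i + 1) mod int L) mod L) = (i + 1) mod int L"
      using L by (simp add: of_nat_mod)
    with e1 have e: "Suc (nat (i mod int L)) mod L = nat ((i + 1) mod int L) mod L" by simp
    have "?f (p i) = (?f ^^ Suc (nat (i mod int L))) c" unfolding p_def by simp
    also have "\<dots> = (?f ^^ (Suc (nat (i mod int L)) mod L)) c" by (rule funpow_mod[OF L(2)])
    also have "\<dots> = (?f ^^ (nat ((i + 1) mod int L) mod L)) c" using e by simp
    also have "\<dots> = p (i + 1)" unfolding p_def by (rule funpow_mod[OF L(2), symmetric])
    finally show ?thesis by simp
  qed
  have pC2: "Cpath E C p" unfolding Cpath_def using pC pstep sc_C[OF d] by auto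
  have pper: "p (i + int L) = p i" for i unfolding p_def by simp
  define x where "x = (\<lambda>u. sf h p (u + 0))"
  have xX: "x \<in> lift E h C" using pC2 lift_iff[OF h] unfolding x_def by blast
  have per: "periodic_point psi x" unfolding periodic_point_def
  proof (intro exI[of _ "of_nat L * h"] conjI)
    show "of_nat L * h > 0" using L h by simp
    have "sf h p (u + (0 + of_nat L * h)) = sf h p (u + 0)" for u
    proof -
      have "sf h p (u + (0 + of_nat L * h)) = sf h p (u + of_int (int L) * h)" by simp
      also have "\<dots> = sf h (\<lambda>i. p (i + int L)) u" by (rule sf_shift[OF h])
      also have "\<dots> = sf h p (u + 0)" using pper by simp
      finally show ?thesis .
    qed
    then show "psi (of_nat L * h) x = x" unfolding x_def psi_sf by simp
  qed
  have inj: "inj_on ?f C"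
  proof (rule finite_surj_inj)
    show "finite C" by simp
    show "C \<subseteq> ?f ` C"
    proof
      fix v assume v: "v \<in> C"
      obtain w where "(w, v) \<in> E \<inter> C \<times> C" using pred_ex[OF scc v] by blast
      then have wv: "w \<in> C" "v \<in> C \<and> (w, v) \<in> E" by auto
      then have "v = ?f w" using sc_iff[OF d wv(1), of v] by simp
      note wv this
      then show "v \<in> ?f ` C" by blast
    qed
  qed
  have "lift E h C \<subseteq> {psi t x | t. True}"
  proof
    fix y assume "y \<in> lift E h C"
    then obtain r s where r: "Cpath E C r" and ye: "y = (\<lambda>u. sf h r (u + s))" using lift_iff[OF h] by blast
    have "(c, r 0) \<in> (E \<inter> C \<times> C)\<^sup>+" using scc c Cpath_C[OF r] unfolding scc_def strongly_connected_in_def by blast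
    then obtain k where k: "r 0 = (?f ^^ k) c" using reach[OF d c] by blast
    define j where "j = int k"
    have r0: "r 0 = p j" unfolding k p_def j_def using funpow_mod[OF L(2), of k] L(1)
      by (simp add: of_nat_mod[symmetric] del: of_nat_mod)
    have "r (int n) = p (int n + j) \<and> r (- int n) = p (- int n + j)" for n
    proof (induction n)
      case 0 then show ?case using r0 by simp
    next
      case (Suc n)
      have a: "r (int (Suc n)) = p (int (Suc n) + j)"
      proof -
        have "r (int n + 1) = ?f (r (int n))" by (rule Cpath_sc[OF d r])
        also have "\<dots> = ?f (p (int n + j))" using Suc by simp
        also have "\<dots> = p (int n + j + 1)" by (rule pstep[symmetric])
        finally show ?thesis by (simp add: ac_simps)
      qed
      have b: "r (- int (Suc n)) = p (- int (Suc n) + j)"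
      proof -
        have "?f (r (- int (Suc n))) = r (- int (Suc n) + 1)" by (rule Cpath_sc[OF d r, symmetric])
        also have "\<dots> = r (- int n)" by simp
        also have "\<dots> = p (- int n + j)" using Suc by simp
        also have "\<dots> = p (- int (Suc n) + j + 1)" by (simp add: ac_simps)
        also have "\<dots> = ?f (p (- int (Suc n) + j))" by (rule pstep)
        finally show ?thesis using inj Cpath_C[OF r] pC unfolding inj_on_def by blast
      qed
      show ?case using a b by blast
    qed
    note rn = this
    have rp: "r i = p (i + j)" for i
    proof (cases "0 \<le> i")
      case True
      then obtain n where "i = int n" using nonneg_int_cases by blast
      then show ?thesis using rn[of n] by simp
    next
      case False
      then have "0 \<le> - i" by simp
      then obtain n where "- i = int n" using nonneg_int_cases by blast
      then have "i = - int n" by simp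
      then show ?thesis using rn[of n] by simp
    qed
    have "y = psi (s + of_int j * h) x"
    proof
      fix u
      have "y u = sf h r (u + s)" using ye by simp
      also have "\<dots> = sf h (\<lambda>i. p (i + j)) (u + s)" using rp by (simp add: sf_def)
      also have "\<dots> = sf h p (u + s + of_int j * h)" by (rule sf_shift[OF h, symmetric])
      also have "\<dots> = psi (s + of_int j * h) x u" unfolding x_def psi_def by (simp add: ac_simps)
      finally show "y u = psi (s + of_int j * h) x u" .
    qed
    then show "y \<in> {psi t x | t. True}" by blast
  qed
  moreover have "{psi t x | t. True} \<subseteq> lift E h C"
  proof
    fix y assume "y \<in> {psi t x | t. True}"
    then obtain t where "y = psi t x" by blast
    then have "y = (\<lambda>u. sf h p (u + (0 + t)))" unfolding x_def psi_sf by simp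
    then show "y \<in> lift E h C" using pC2 lift_iff[OF h] by blast
  qed
  ultimately show ?thesis using xX per by blast
qed


theorem mainTheorem13:
  fixes E :: "('v::finite \<times> 'v) set" and h :: real and C :: "'v set"
  assumes "h > 0" and "scc E C"
  shows "((\<exists>v\<in>C. out_degree_in E C v > 1) \<longrightarrow> chaotic (lift E h C) (dist_Delta h) psi)
       \<and> ((\<forall>v\<in>C. out_degree_in E C v = 1) \<longrightarrow>
            (\<exists>x\<in>lift E h C. periodic_point psi x \<and> lift E h C = {psi t x | t. True}))"
proof (intro conjI impI)
  assume "\<exists>v\<in>C. out_degree_in E C v > 1"
  then obtain v where v: "v \<in> C" "out_degree_in E C v > 1" by blast
  show "chaotic (lift E h C) (dist_Delta h) psi"
    unfolding chaotic_def
    using part_sens[OF assms v] part_dense[OF assms] part_trans[OF assms] by blast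
next
  assume "\<forall>v\<in>C. out_degree_in E C v = 1"
  then show "\<exists>x\<in>lift E h C. periodic_point psi x \<and> lift E h C = {psi t x | t. True}"
    using part2[OF assms] by blast
qed

end
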